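(* Let $K$ be a finite field of characteristic $p$ and order $q$, let $s$ be a positive integer with $\gcd(s,q-1)=1$, and let $\tau$ be the permutation of $\mathcal{W}_{K,s}$ defined below. Then $\tau$ is a single cycle (i.e., a cycle containing all elements of $\mathcal{W}_{K,s}$) if and only if $K=\mathbb{F}_2$; in that case $s$ is degenerate and $\tau$ is a $1$-cycle.
   Context: $\zeta=\exp(2\pi i/p)$, $\psi(x)=\zeta^{\mathrm{Tr}(x)}$ with $\mathrm{Tr}$ the absolute trace of $K$ to $\mathbb{F}_p$; $W_u=\sum_{x\in K}\psi(x^s-ux)$; $\mathcal{W}_{K,s}=\{W_u:u\in K^\times\}$. Let $\gamma$ be a primitive element of $\mathbb{F}_p$ and $\sigma\in\mathrm{Gal}(\mathbb{Q}(\zeta)/\mathbb{Q})$ with $\sigma(\zeta)=\zeta^\gamma$; it is known that $\sigma(W_u)=W_{\gamma^{1-1/s}u}$ (with $1/s$ the inverse of $s$ mod $p-1$), so $\sigma$ restricts to a permutation $\tau$ of $\mathcal{W}_{K,s}$. The exponent $s$ is degenerate over $K$ if $s\equiv p^k\pmod{q-1}$ for some integer $k$. *)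

theory Defs
  imports "HOL-Analysis.Analysis" "HOL-Number_Theory.Number_Theory"
begin

text \<open>K is modelled by a finite field type 'a; p = CHAR('a), q = CARD('a) = p^n.\<close>

definition ext_deg :: "'a::{finite,field} itself \<Rightarrow> nat" where
  "ext_deg T = (THE n. CARD('a) = CHAR('a) ^ n)"

text \<open>Absolute trace K -> F_p (as an element of K lying in the prime field).\<close>
definition abs_trace :: "'a::{finite,field} \<Rightarrow> 'a" where
  "abs_trace x = (\<Sum>i<ext_deg TYPE('a). x ^ (CHAR('a) ^ i))"

definition trace_nat :: "'a::{finite,field} \<Rightarrow> nat" where
  "trace_nat x = (THE k. k < CHAR('a) \<and> of_nat k = abs_trace x)"

definition zeta :: "nat \<Rightarrow> complex" where
  "zeta p = cis (2 * pi / real p)"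

definition psi :: "'a::{finite,field} \<Rightarrow> complex" where
  "psi x = zeta CHAR('a) ^ trace_nat x"

definition Wsum :: "nat \<Rightarrow> 'a::{finite,field} \<Rightarrow> complex" where
  "Wsum s u = (\<Sum>x\<in>UNIV. psi (x ^ s - u * x))"

definition Wset :: "'a::{finite,field} itself \<Rightarrow> nat \<Rightarrow> complex set" where
  "Wset T s = {Wsum s (u::'a) | u. u \<noteq> 0}"

definition Qzeta :: "nat \<Rightarrow> complex set" where
  "Qzeta p = {\<Sum>j<p. of_rat (r j) * zeta p ^ j | r. True}"

definition is_galois_sigma :: "nat \<Rightarrow> nat \<Rightarrow> (complex \<Rightarrow> complex) \<Rightarrow> bool" where
  "is_galois_sigma p \<gamma> \<sigma> \<longleftrightarrow>
     (\<forall>x\<in>Qzeta p. \<forall>y\<in>Qzeta p. \<sigma> (x + y) = \<sigma> x + \<sigma> y \<and> \<sigma> (x * y) = \<sigma> x * \<sigma> y)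
     \<and> \<sigma> 1 = 1 \<and> \<sigma> (zeta p) = zeta p ^ \<gamma>"

definition single_cycle :: "('b \<Rightarrow> 'b) \<Rightarrow> 'b set \<Rightarrow> bool" where
  "single_cycle f A \<longleftrightarrow> A \<noteq> {} \<and> (\<forall>w\<in>A. A = {(f ^^ n) w | n. True})"

definition degenerate :: "'a::{finite,field} itself \<Rightarrow> nat \<Rightarrow> bool" where
  "degenerate T s \<longleftrightarrow> (\<exists>k. [s = CHAR('a) ^ k] (mod (CARD('a) - 1)))"

end

theory Submission
  imports Defs "HOL-Computational_Algebra.Polynomial" "HOL-Library.Real_Mod"
begin


lemma char_prime: "prime CHAR('a::{finite,field})"
  by (rule prime_CHAR_semidom) (rule finite_imp_CHAR_pos, simp)

lemma char_ge2: "CHAR('a::{finite,field}) \<ge> 2"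
  using char_prime[where 'a='a] prime_ge_2_nat by blast

lemma card_ge2: "CARD('a::{finite,field}) \<ge> 2"
proof -
  have "{0::'a, 1} \<subseteq> UNIV" by simp
  hence "card {0::'a,1} \<le> CARD('a)" by (intro card_mono) auto
  thus ?thesis by simp
qed

lemma pow_card_same:
  fixes x :: "'a::{finite,field}"
  shows "x ^ CARD('a) = x"
proof (cases "x = 0")
  case False
  have "x * (\<Prod>y\<in>UNIV-{0}. x * y) = x * x ^ (card (UNIV :: 'a set) - 1) * \<Prod>(UNIV-{0})"
    by (simp add: prod.distrib mult_ac)
  also have "x * x ^ (card (UNIV :: 'a set) - 1) = x ^ Suc (card (UNIV :: 'a set) - 1)"
    by (subst power_Suc) auto
  also have "Suc (card (UNIV :: 'a set) - 1) = card (UNIV :: 'a set)"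
    using finite_UNIV_card_ge_0[where ?'a = 'a] by simp
  also have "(\<Prod>y\<in>UNIV-{0}. x * y) = (\<Prod>y\<in>UNIV-{0}. y)"
    by (rule prod.reindex_bij_witness[of _ "\<lambda>y. y / x" "\<lambda>y. x * y"]) (use False in auto)
  finally show ?thesis
    by simp
qed (use finite_UNIV_card_ge_0[where ?'a = 'a] in auto)

lemma pow_card1:
  fixes x :: "'a::{finite,field}"
  assumes "x \<noteq> 0" shows "x ^ (CARD('a) - 1) = 1"
proof -
  obtain m where m: "CARD('a) = Suc m" using card_ge2[where 'a='a] by (cases "CARD('a)") auto
  have "x * x ^ (CARD('a) - 1) = x * 1"
    using pow_card_same[of x] unfolding m by simp
  thus ?thesis using assms by simp
qed

definition addcl :: "'a::{finite,field} set \<Rightarrow> bool" where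
  "addcl V \<longleftrightarrow> 0 \<in> V \<and> (\<forall>x\<in>V. \<forall>y\<in>V. x + y \<in> V)"

lemma addcl_ofnat:
  fixes V :: "'a::{finite,field} set"
  assumes "addcl V" "x \<in> V" shows "of_nat m * x \<in> V"
  using assms by (induction m) (auto simp: addcl_def distrib_right)

lemma addcl_minus:
  fixes V :: "'a::{finite,field} set"
  assumes "addcl V" "x \<in> V" shows "- x \<in> V"
proof -
  obtain m where m: "CHAR('a) = Suc m" using char_ge2[where 'a='a] by (cases "CHAR('a)") auto
  have "of_nat (CHAR('a) - 1) * x + x = of_nat CHAR('a) * x"
    unfolding m by (simp add: algebra_simps)
  also have "\<dots> = 0" by simp
  finally have "of_nat (CHAR('a) - 1) * x + x = 0" .
  hence e: "of_nat (CHAR('a) - 1) * x = - x" by (simp only: eq_neg_iff_add_eq_0)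
  show ?thesis using addcl_ofnat[OF assms, of "CHAR('a) - 1"] unfolding e .
qed

lemma ofnat_inv:
  assumes "0 < c" "c < CHAR('a::{finite,field})"
  shows "of_nat (c ^ (CHAR('a) - 2)) * of_nat c = (1::'a)"
proof -
  let ?p = "CHAR('a)"
  have "\<not> ?p dvd c" using assms by (auto dest: dvd_imp_le)
  hence "[c ^ (?p - 1) = 1] (mod ?p)" using fermat_theorem char_prime by blast
  moreover have "c ^ (?p - 2) * c = c ^ (?p - 1)"
  proof -
    obtain m where m: "?p = Suc (Suc m)" using char_ge2[where 'a='a]
      by (metis add_2_eq_Suc le_add_diff_inverse2 add.commute)
    show ?thesis unfolding m by (simp add: power_Suc2)
  qed
  ultimately have "of_nat (c ^ (?p - 2) * c) = (of_nat 1 :: 'a)"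
    by (simp only: of_nat_eq_iff_cong_CHAR)
  thus ?thesis by simp
qed



lemma addcl_step:
  fixes V :: "'a::{finite,field} set"
  assumes V: "addcl V" and a: "a \<notin> V"
  shows "addcl ((\<lambda>(v,i). v + of_nat i * a) ` (V \<times> {..<CHAR('a)}))
      \<and> card ((\<lambda>(v,i). v + of_nat i * a) ` (V \<times> {..<CHAR('a)})) = card V * CHAR('a)"
proof -
  let ?p = "CHAR('a)"
  let ?f = "\<lambda>(v,i). v + of_nat i * a"
  have p2: "?p \<ge> 2" by (rule char_ge2)
  have cl: "addcl (?f ` (V \<times> {..<?p}))"
    unfolding addcl_def
  proof (intro conjI ballI)
    show "0 \<in> ?f ` (V \<times> {..<?p})"
    proof (rule image_eqI[where x="(0,0)"])
      show "(0::'a) = ?f (0, 0)" by simp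
      show "(0, 0) \<in> V \<times> {..<?p}" using V p2 by (auto simp: addcl_def)
    qed
  next
    fix x y assume "x \<in> ?f ` (V \<times> {..<?p})" "y \<in> ?f ` (V \<times> {..<?p})"
    then obtain v i w j where vi: "v \<in> V" "i < ?p" "x = v + of_nat i * a"
      and wj: "w \<in> V" "j < ?p" "y = w + of_nat j * a" by auto
    have "of_nat (i + j) = (of_nat ((i + j) mod ?p) :: 'a)"
      by (simp only: of_nat_eq_iff_cong_CHAR cong_def mod_mod_trivial)
    have "x + y = (v + w) + of_nat (i + j) * a"
      using vi wj by (simp add: algebra_simps)
    also have "\<dots> = (v + w) + of_nat ((i + j) mod ?p) * a"
      using \<open>of_nat (i + j) = (of_nat ((i + j) mod ?p) :: 'a)\<close> by simp
    finally have "x + y = (v + w) + of_nat ((i + j) mod ?p) * a" .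
    moreover have "v + w \<in> V" using V vi wj by (auto simp: addcl_def)
    moreover have "(i + j) mod ?p < ?p" using p2 by simp
    ultimately show "x + y \<in> ?f ` (V \<times> {..<?p})" by (auto simp: image_iff intro!: bexI[of _ "(v+w, (i+j) mod ?p)"])
  qed
  have key: False if "v \<in> V" "w \<in> V" "i < j" "j < ?p" "v + of_nat i * a = w + of_nat j * a" for v w i j
  proof -
    have "v - w = of_nat (j - i) * a" using that
      by (simp add: of_nat_diff algebra_simps)
    moreover have "v - w \<in> V" using that V addcl_minus[OF V, of w]
      by (auto simp: addcl_def)
    ultimately have "of_nat (j - i) * a \<in> V" by simp
    hence "of_nat ((j - i) ^ (?p - 2)) * (of_nat (j - i) * a) \<in> V" by (rule addcl_ofnat[OF V])
    also have "of_nat ((j - i) ^ (?p - 2)) * (of_nat (j - i) * a) = a"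
      using ofnat_inv[of "j - i", where 'a='a] that by (simp add: mult.assoc[symmetric])
    finally show False using a by simp
  qed
  have inj: "inj_on ?f (V \<times> {..<?p})"
  proof (rule inj_onI, clarsimp)
    fix v i w j assume h: "v \<in> V" "i < ?p" "w \<in> V" "j < ?p" "v + of_nat i * a = w + of_nat j * a"
    show "v = w \<and> i = j"
    proof (cases i j rule: linorder_cases)
      case less thus ?thesis using key[of v w i j] h by auto
    next
      case greater thus ?thesis using key[of w v j i] h by auto
    next
      case equal thus ?thesis using h by simp
    qed
  qed
  have "card (?f ` (V \<times> {..<?p})) = card V * ?p"
    by (simp add: card_image[OF inj] card_cartesian_product)
  with cl show ?thesis by simp
qed

lemma card_power_char_aux:
  fixes V :: "'a::{finite,field} set"
  assumes "addcl V" "card V = CHAR('a) ^ k"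
  shows "\<exists>n. CARD('a) = CHAR('a) ^ n"
  using assms
proof (induction "CARD('a) - card V" arbitrary: V k rule: less_induct)
  case (less V k)
  show ?case
  proof (cases "V = UNIV")
    case True thus ?thesis using less by auto
  next
    case False
    then obtain a where a: "a \<notin> V" by auto
    let ?V = "(\<lambda>(v,i). v + of_nat i * a) ` (V \<times> {..<CHAR('a)})"
    have st: "addcl ?V" "card ?V = card V * CHAR('a)" using addcl_step[OF less(2) a] by auto
    have "V \<noteq> {}" using less(2) by (auto simp: addcl_def)
    hence "card V \<ge> 1" by (simp add: Suc_le_eq card_gt_0_iff)
    hence "card V < card ?V" using st char_ge2[where 'a='a] by simp
    moreover have "card ?V \<le> CARD('a)" by (rule card_mono) auto
    ultimately have "CARD('a) - card ?V < CARD('a) - card V" by linarith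
    moreover have "card ?V = CHAR('a) ^ Suc k" using st less(3) by simp
    ultimately show ?thesis by (rule less(1)[OF _ st(1)])
  qed
qed

lemma card_power_char: "\<exists>n. CARD('a::{finite,field}) = CHAR('a) ^ n"
  by (rule card_power_char_aux[of "{0}" 0]) (auto simp: addcl_def)

lemma ext_deg: "CARD('a::{finite,field}) = CHAR('a) ^ ext_deg TYPE('a)"
proof -
  obtain n where n: "CARD('a) = CHAR('a) ^ n" using card_power_char by blast
  have "ext_deg TYPE('a) = n" unfolding ext_deg_def
    by (rule the_equality) (use n char_ge2[where 'a='a] power_inject_exp in auto)
  with n show ?thesis by simp
qed

lemma ext_deg_pos: "ext_deg TYPE('a::{finite,field}) \<ge> 1"
proof (rule ccontr)
  assume "\<not> ?thesis" hence "ext_deg TYPE('a) = 0" by simp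
  hence "CARD('a) = 1" using ext_deg[where 'a='a] by simp
  thus False using card_ge2[where 'a='a] by simp
qed



lemma tr_add: "abs_trace (x + y) = abs_trace x + abs_trace (y::'a::{finite,field})"
  unfolding abs_trace_def by (simp add: sum.distrib freshmans_dream'[OF char_prime refl])

lemma tr_0: "abs_trace (0::'a::{finite,field}) = 0"
  unfolding abs_trace_def using char_ge2[where 'a='a] by (simp add: power_0_left)

lemma tr_diff: "abs_trace (x - y) = abs_trace x - abs_trace (y::'a::{finite,field})"
  using tr_add[of "x - y" y] by (simp add: algebra_simps)

lemma tr_pow: "abs_trace (x::'a::{finite,field}) ^ CHAR('a) = abs_trace x"
proof -
  let ?p = "CHAR('a)" and ?n = "ext_deg TYPE('a)"
  define g where "g = (\<lambda>i. x ^ (?p ^ i))"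
  have "abs_trace x ^ ?p = (\<Sum>i<?n. (x ^ (?p ^ i)) ^ ?p)"
    unfolding abs_trace_def by (rule freshmans_dream_sum[OF char_prime refl])
  also have "\<dots> = (\<Sum>i<?n. g (Suc i))"
  proof (rule sum.cong)
    fix i show "(x ^ (?p ^ i)) ^ ?p = g (Suc i)" unfolding g_def by (simp only: power_mult[symmetric] power_Suc2)
  qed simp
  also have "\<dots> = (\<Sum>i<?n. g i)"
  proof -
    have "(\<Sum>i<Suc ?n. g i) = g 0 + (\<Sum>i<?n. g (Suc i))" by (rule sum.lessThan_Suc_shift)
    moreover have "(\<Sum>i<Suc ?n. g i) = (\<Sum>i<?n. g i) + g ?n" by simp
    moreover have "g ?n = g 0" unfolding g_def using pow_card_same[of x] ext_deg[where 'a='a] by simp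
    ultimately show ?thesis by simp
  qed
  also have "\<dots> = abs_trace x" unfolding g_def abs_trace_def by (rule refl)
  finally show ?thesis .
qed

lemma pf_subset: "(of_nat ` {..<CHAR('a)} :: 'a::{finite,field} set) \<subseteq> {y. y ^ CHAR('a) = y}"
proof (rule subsetI)
  fix y :: 'a assume "y \<in> of_nat ` {..<CHAR('a)}"
  then obtain k where k: "k < CHAR('a)" and yk: "y = of_nat k" by blast
  let ?p = "CHAR('a)"
  have "[k ^ ?p = k] (mod ?p)"
  proof (cases "k = 0")
    case True thus ?thesis using char_ge2[where 'a='a] by (simp add: power_0_left)
  next
    case False
    hence "\<not> ?p dvd k" using k by (auto dest: dvd_imp_le)
    hence "[k ^ (?p - 1) = 1] (mod ?p)" using fermat_theorem char_prime by blast
    hence "[k ^ (?p - 1) * k = 1 * k] (mod ?p)" by (rule cong_mult) simp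
    moreover have "k ^ (?p - 1) * k = k ^ ?p"
    proof -
      obtain m where m: "?p = Suc m" using char_ge2[where 'a='a] by (cases "?p") auto
      show ?thesis unfolding m by (simp add: power_Suc2)
    qed
    ultimately show ?thesis by simp
  qed
  hence "(of_nat (k ^ ?p) :: 'a) = of_nat k" by (simp only: of_nat_eq_iff_cong_CHAR)
  hence "(of_nat k :: 'a) ^ ?p = of_nat k" by (simp only: of_nat_power)
  thus "y \<in> {y. y ^ ?p = y}" using yk by simp
qed

lemma card_pf: "card (of_nat ` {..<CHAR('a)} :: 'a::{finite,field} set) = CHAR('a)"
proof -
  have "inj_on (of_nat :: nat \<Rightarrow> 'a) {..<CHAR('a)}"
    by (rule inj_onI) (simp add: of_nat_eq_iff_cong_CHAR cong_def)
  thus ?thesis by (simp add: card_image)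
qed

lemma card_roots_p: "card {y::'a::{finite,field}. y ^ CHAR('a) = y} \<le> CHAR('a)"
proof -
  let ?p = "CHAR('a)"
  define P :: "'a poly" where "P = Polynomial.monom 1 ?p - Polynomial.monom 1 1"
  have p2: "?p \<ge> 2" by (rule char_ge2)
  have "Polynomial.coeff P ?p = 1" using p2 by (simp add: P_def)
  hence P0: "P \<noteq> 0" by auto
  have "degree P \<le> ?p" unfolding P_def
    by (intro degree_diff_le) (use p2 in \<open>simp_all add: degree_monom_eq\<close>)
  moreover have "{y. poly P y = 0} = {y. y ^ ?p = y}" by (simp add: P_def poly_monom)
  ultimately show ?thesis using card_poly_roots_bound[OF P0] by simp
qed

lemma pf_eq: "{y. y ^ CHAR('a) = y} = (of_nat ` {..<CHAR('a)} :: 'a::{finite,field} set)"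
proof -
  have "card (of_nat ` {..<CHAR('a)} :: 'a set) \<le> card {y::'a. y ^ CHAR('a) = y}"
    by (rule card_mono[OF _ pf_subset]) simp
  hence "card (of_nat ` {..<CHAR('a)} :: 'a set) = card {y::'a. y ^ CHAR('a) = y}"
    using card_pf[where 'a='a] card_roots_p[where 'a='a] by linarith
  hence "(of_nat ` {..<CHAR('a)} :: 'a set) = {y::'a. y ^ CHAR('a) = y}"
    by (rule card_subset_eq[OF _ pf_subset, rotated]) simp
  thus ?thesis by simp
qed

lemma tr_in_pf: "abs_trace (x::'a::{finite,field}) \<in> of_nat ` {..<CHAR('a)}"
  using tr_pow[of x] pf_eq[where 'a='a] by blast

lemma trace_nat_props:
  "trace_nat (x::'a::{finite,field}) < CHAR('a) \<and> of_nat (trace_nat x) = abs_trace x"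
  unfolding trace_nat_def
proof (rule theI')
  show "\<exists>!k. k < CHAR('a) \<and> of_nat k = abs_trace x"
  proof (rule ex_ex1I)
    show "\<exists>k. k < CHAR('a) \<and> of_nat k = abs_trace x" using tr_in_pf[of x] by force
  next
    fix k l assume h: "k < CHAR('a) \<and> (of_nat k::'a) = abs_trace x" "l < CHAR('a) \<and> (of_nat l::'a) = abs_trace x"
    hence "(of_nat k::'a) = of_nat l" by simp
    hence "k mod CHAR('a) = l mod CHAR('a)" by (simp only: of_nat_eq_iff_cong_CHAR cong_def)
    thus "k = l" using h by simp
  qed
qed

lemma trace_nat_dvd: "CHAR('a) dvd trace_nat (x::'a::{finite,field}) \<longleftrightarrow> abs_trace x = 0"
proof -
  have "CHAR('a) dvd trace_nat x \<longleftrightarrow> (of_nat (trace_nat x) :: 'a) = 0"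
    by (simp add: of_nat_eq_0_iff_char_dvd)
  thus ?thesis using trace_nat_props[of x] by simp
qed

lemma trace_nat_0: "trace_nat (0::'a::{finite,field}) = 0"
proof -
  have "CHAR('a) dvd trace_nat (0::'a)" using trace_nat_dvd[of "0::'a"] tr_0[where 'a='a] by simp
  hence "trace_nat (0::'a) mod CHAR('a) = 0" by simp
  moreover have "trace_nat (0::'a) mod CHAR('a) = trace_nat (0::'a)"
    using trace_nat_props[of "0::'a"] by (intro mod_less) simp
  ultimately show ?thesis by simp
qed

lemma tr_nonzero: "\<exists>x::'a::{finite,field}. abs_trace x \<noteq> 0"
proof (rule ccontr)
  assume "\<not> ?thesis"
  hence all0: "\<forall>x::'a. abs_trace x = 0" by simp
  let ?p = "CHAR('a)" and ?n = "ext_deg TYPE('a)"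
  define P :: "'a poly" where "P = (\<Sum>i<?n. Polynomial.monom 1 (?p ^ i))"
  have p2: "?p \<ge> 2" by (rule char_ge2)
  have n1: "?n \<ge> 1" by (rule ext_deg_pos)
  have "Polynomial.coeff P (?p ^ (?n - 1)) = (\<Sum>i<?n. if ?p ^ i = ?p ^ (?n - 1) then 1 else 0)"
    by (simp add: P_def coeff_sum)
  also have "\<dots> = (\<Sum>i\<in>{?n - 1}. 1)"
  proof (rule sum.mono_neutral_cong_right)
    show "{?n - 1} \<subseteq> {..<?n}" using n1 by auto
  qed (use p2 power_inject_exp in auto)
  finally have "Polynomial.coeff P (?p ^ (?n - 1)) = 1" by simp
  hence P0: "P \<noteq> 0" by auto
  have "degree P \<le> ?p ^ (?n - 1)" unfolding P_def
  proof (intro degree_sum_le)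
    fix i assume "i \<in> {..<?n}"
    hence "i \<le> ?n - 1" by simp
    hence "?p ^ i \<le> ?p ^ (?n - 1)" using p2 by (intro power_increasing) auto
    thus "degree (Polynomial.monom (1::'a) (?p ^ i)) \<le> ?p ^ (?n - 1)" by (simp add: degree_monom_eq)
  qed simp
  moreover have "{y. poly P y = 0} = UNIV" using all0 by (simp add: P_def poly_sum poly_monom abs_trace_def)
  ultimately have "CARD('a) \<le> ?p ^ (?n - 1)" using card_poly_roots_bound[OF P0] by simp
  moreover have "?p ^ (?n - 1) < ?p ^ ?n" using p2 n1 by (intro power_strict_increasing) auto
  ultimately show False using ext_deg[where 'a='a] by simp
qed



lemma pow_mod_card:
  fixes z :: "'a::{finite,field}"
  assumes "z \<noteq> 0" shows "z ^ m = z ^ (m mod (CARD('a) - 1))"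
proof -
  let ?d = "CARD('a) - 1"
  have "z ^ m = z ^ (?d * (m div ?d) + m mod ?d)" by simp
  also have "\<dots> = (z ^ ?d) ^ (m div ?d) * z ^ (m mod ?d)" by (simp only: power_add power_mult)
  also have "\<dots> = z ^ (m mod ?d)" using pow_card1[OF assms] by simp
  finally show ?thesis .
qed

lemma pow_inj:
  assumes q2: "CARD('a::{finite,field}) > 2" and s: "s > 0" and cop: "coprime s (CARD('a) - 1)"
  shows "inj (\<lambda>x::'a. x ^ s)"
proof (rule injI)
  let ?d = "CARD('a) - 1"
  obtain s' where s': "[s * s' = Suc 0] (mod ?d)" using cong_solve_coprime_nat[OF cop] by blast
  have m1: "(s * s') mod ?d = 1" using s' q2 by (simp add: cong_def)
  have "s * s' \<noteq> 0"
  proof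
    assume "s * s' = 0" with m1 show False by simp
  qed
  have inv: "(z ^ s) ^ s' = z" for z :: 'a
  proof (cases "z = 0")
    case True thus ?thesis using \<open>s * s' \<noteq> 0\<close> by (simp add: power_mult[symmetric])
  next
    case False
    have "(z ^ s) ^ s' = z ^ (s * s')" by (simp add: power_mult)
    also have "\<dots> = z ^ ((s * s') mod ?d)" by (rule pow_mod_card[OF False])
    finally show ?thesis using m1 by simp
  qed
  fix x y :: 'a assume "x ^ s = y ^ s"
  thus "x = y" using inv[of x] inv[of y] by metis
qed

lemma card_as_sum: "card {x::'b::finite. P x} = (\<Sum>x\<in>UNIV. if P x then 1 else 0)"
  by (simp add: sum.If_cases)

lemma field_main:
  fixes s :: nat
  assumes q2: "CARD('a::{finite,field}) > 2" and s: "s > 0" and cop: "coprime s (CARD('a) - 1)"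
    and N: "\<forall>u::'a. u \<noteq> 0 \<longrightarrow> card {x::'a. abs_trace (x ^ s - u * x) = 0} = card {x::'a. abs_trace (x ^ s - x) = 0}"
  shows False
proof -
  let ?q = "CARD('a)" and ?p = "CHAR('a)"
  define Zs where "Zs = {y::'a. abs_trace y = 0}"
  define Z where "Z = card Zs"
  define Nf where "Nf = (\<lambda>u::'a. card {x::'a. abs_trace (x ^ s - u * x) = 0})"
  define N1 where "N1 = card {x::'a. abs_trace (x ^ s - x) = 0}"
  have Nu: "Nf u = N1" if "u \<noteq> 0" for u using N that by (simp add: Nf_def N1_def)
  have cu0: "card {u::'a. abs_trace (0 ^ s - u * 0) = 0} = ?q" using s by (simp add: tr_0 power_0_left)
  have cux: "card {u::'a. abs_trace (x ^ s - u * x) = 0} = Z" if x: "x \<noteq> 0" for x :: 'a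
  proof -
    have inj: "inj (\<lambda>u. x ^ s - u * x)" using x by (intro injI) simp
    have "(\<lambda>u. x ^ s - u * x) ` {u::'a. abs_trace (x ^ s - u * x) = 0} = Zs"
    proof (auto simp: Zs_def)
      fix y :: 'a assume "abs_trace y = 0"
      thus "y \<in> (\<lambda>u. x ^ s - u * x) ` {u. abs_trace (x ^ s - u * x) = 0}"
        using x by (intro image_eqI[where x="(x ^ s - y) / x"]) (auto simp: field_simps)
    qed
    thus ?thesis using card_image[OF inj_on_subset[OF inj]] Z_def by (metis subset_UNIV)
  qed
  have injp: "inj (\<lambda>x::'a. x ^ s)" by (rule pow_inj[OF q2 s cop])
  have surjp: "surj (\<lambda>x::'a. x ^ s)" by (rule finite_UNIV_inj_surj[OF _ injp]) simp
  have N0: "Nf 0 = Z"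
  proof -
    have "{x::'a. abs_trace (x ^ s - 0 * x) = 0} = (\<lambda>x. x ^ s) -` Zs" by (auto simp: Zs_def)
    thus ?thesis using card_vimage_inj[OF injp, of Zs] surjp by (simp add: Nf_def Z_def)
  qed
  have c1: "Nf u = (\<Sum>x\<in>UNIV. if abs_trace (x ^ s - u * x) = 0 then 1 else 0)" for u
    unfolding Nf_def by (rule card_as_sum)
  have c2: "card {u::'a. abs_trace (x ^ s - u * x) = 0} = (\<Sum>u\<in>UNIV. if abs_trace (x ^ s - u * x) = 0 then 1 else 0)" for x :: 'a
    by (rule card_as_sum)
  have "(\<Sum>u\<in>UNIV. Nf u) = (\<Sum>u\<in>UNIV. \<Sum>x\<in>UNIV. if abs_trace ((x::'a) ^ s - (u::'a) * x) = 0 then 1 else 0)"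
    by (simp only: c1)
  also have "\<dots> = (\<Sum>x\<in>UNIV. \<Sum>u\<in>UNIV. if abs_trace ((x::'a) ^ s - (u::'a) * x) = 0 then 1 else 0)"
    by (rule sum.swap)
  also have "\<dots> = (\<Sum>x\<in>UNIV. card {u::'a. abs_trace ((x::'a) ^ s - (u::'a) * x) = 0})"
    by (simp only: c2)
  also have "\<dots> = card {u::'a. abs_trace (0 ^ s - u * 0) = 0} + (\<Sum>x\<in>UNIV - {0}. card {u::'a. abs_trace (x ^ s - u * x) = 0})"
    by (rule sum.remove) auto
  also have "\<dots> = ?q + (?q - 1) * Z" using cu0 cux by (simp add: card_Diff_singleton)
  finally have e1: "(\<Sum>u\<in>UNIV. Nf u) = ?q + (?q - 1) * Z" .
  have "(\<Sum>u\<in>UNIV. Nf u) = Nf 0 + (\<Sum>u\<in>UNIV - {0}. Nf u)" by (rule sum.remove) auto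
  also have "\<dots> = Z + (?q - 1) * N1" using N0 Nu by (simp add: card_Diff_singleton)
  finally have e2: "Z + (?q - 1) * N1 = ?q + (?q - 1) * Z" using e1 by simp
  have Z1: "Z \<ge> 1" unfolding Z_def Zs_def
    by (metis (mono_tags) One_nat_def Suc_leI card_gt_0_iff empty_iff finite mem_Collect_eq tr_0)
  have Zq: "Z < ?q"
  proof -
    obtain x :: 'a where "abs_trace x \<noteq> 0" using tr_nonzero by blast
    hence "Zs \<subset> UNIV" by (auto simp: Zs_def)
    thus ?thesis unfolding Z_def by (intro psubset_card_mono) simp_all
  qed
  have ZN: "Z = 1 \<and> N1 = 2"
  proof -
    define d where "d = ?q - 1"
    have d2: "d \<ge> 2" "?q = d + 1" using q2 by (auto simp: d_def)
    have e: "Z + d * N1 = d + 1 + d * Z" using e2 unfolding d2(2) by simp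
    show ?thesis
    proof (cases "N1 \<le> Z")
      case True
      hence "d * N1 \<le> d * Z" by (rule mult_le_mono2)
      thus ?thesis using e Zq d2 by linarith
    next
      case False
      hence "d * (Z + 1) \<le> d * N1" by (intro mult_le_mono2) simp
      hence "d * Z + d \<le> d * N1" by (simp add: distrib_left)
      hence Zeq: "Z = 1" using e Z1 by linarith
      hence "1 + d * N1 = d + 1 + d * 1" using e by simp
      hence "d * N1 = d * 2" by linarith
      thus ?thesis using Zeq d2 by simp
    qed
  qed
  have Zs1: "Zs = {0}"
  proof -
    have "0 \<in> Zs" by (simp add: Zs_def tr_0)
    moreover have "finite Zs" by simp
    moreover have "card Zs = 1" using ZN Z_def by simp
    then obtain a where "Zs = {a}" by (rule card_1_singletonE)
    ultimately show ?thesis by simp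
  qed
  have trinj: "inj (abs_trace :: 'a \<Rightarrow> 'a)"
  proof (rule injI)
    fix x y :: 'a assume "abs_trace x = abs_trace y"
    hence "x - y \<in> Zs" by (simp add: Zs_def tr_diff)
    thus "x = y" using Zs1 by simp
  qed
  have "?q \<le> card (of_nat ` {..<?p} :: 'a set)"
    by (rule card_inj_on_le[OF trinj]) (auto intro: tr_in_pf)
  hence "?q \<le> ?p" using card_pf[where 'a='a] by simp
  moreover have "?p \<le> ?q" using CHAR_dvd_CARD[where 'a='a] by (intro dvd_imp_le) auto
  ultimately have pq: "?p = ?q" by simp
  have "odd ?p" using char_prime[where 'a='a] pq q2 prime_odd_nat by auto
  hence "even (?q - 1)" using pq q2 by simp
  have odds: "odd s"
  proof (rule ccontr)
    assume "\<not> odd s" hence "2 dvd s" by simp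
    from coprime_common_divisor_nat[OF cop this \<open>even (?q - 1)\<close>] show False by simp
  qed
  have two: "(2::'a) \<noteq> 0"
  proof
    assume "(2::'a) = 0"
    hence "(of_nat 2 :: 'a) = 0" by simp
    hence "?p dvd 2" by (simp only: of_nat_eq_0_iff_char_dvd)
    thus False using pq q2 by (auto dest: dvd_imp_le)
  qed
  have m1: "(-1::'a) \<noteq> 1"
  proof
    assume h: "(-1::'a) = 1"
    have "(2::'a) = 1 + 1" by simp
    also have "\<dots> = 1 + (-1)" using h by simp
    also have "\<dots> = 0" by simp
    finally show False using two by simp
  qed
  have "{0, 1, -1} \<subseteq> {x::'a. abs_trace (x ^ s - x) = 0}"
    using s odds by (auto simp: tr_0 power_0_left)
  hence "card {0::'a, 1, -1} \<le> N1" unfolding N1_def by (intro card_mono) auto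
  moreover have "card {0::'a, 1, -1} = 3" using m1 by simp
  ultimately show False using ZN by simp
qed



lemma zeta_pow_p: assumes p: "p > 0" shows "zeta p ^ p = 1"
proof -
  have "zeta p ^ p = cis (real p * (2 * pi / real p))" by (simp only: zeta_def Complex.DeMoivre)
  also have "real p * (2 * pi / real p) = 2 * pi" using p by simp
  finally show ?thesis by simp
qed

lemma zeta_pow_mod: "p > 0 \<Longrightarrow> zeta p ^ k = zeta p ^ (k mod p)"
proof -
  assume p: "p > 0"
  have "zeta p ^ k = zeta p ^ (p * (k div p) + k mod p)" by simp
  also have "\<dots> = (zeta p ^ p) ^ (k div p) * zeta p ^ (k mod p)" by (simp only: power_add power_mult)
  finally show ?thesis using zeta_pow_p[OF p] by simp
qed

lemma zeta_pow_eq1: assumes p: "p > 0" shows "zeta p ^ j = 1 \<longleftrightarrow> p dvd j"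
proof
  assume "p dvd j"
  then obtain m where "j = p * m" by auto
  thus "zeta p ^ j = 1" using zeta_pow_p[OF p] by (simp add: power_mult)
next
  assume h: "zeta p ^ j = 1"
  let ?r = "j mod p"
  have r1: "zeta p ^ ?r = 1" using h zeta_pow_mod[OF p, of j] by simp
  show "p dvd j"
  proof (rule ccontr)
    assume "\<not> p dvd j"
    hence r0: "?r > 0" "?r < p" using p by (auto simp: mod_eq_0_iff_dvd[symmetric])
    have "zeta p ^ ?r = cis (real ?r * (2 * pi / real p))" by (simp only: zeta_def Complex.DeMoivre)
    hence "cis (real ?r * (2 * pi / real p)) = 1" using r1 by simp
    then obtain n :: int where n: "real ?r * (2 * pi / real p) = of_int n * (2 * pi)"
      by (auto simp: cis_eq_1_iff)
    hence "real ?r = of_int n * real p" using p by (simp add: field_simps)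
    hence "int ?r = n * int p" by (metis of_int_eq_iff of_int_mult of_int_of_nat_eq)
    moreover have "int ?r > 0" "int ?r < int p" using r0 by auto
    ultimately show False
    proof (cases "n \<le> 0")
      case True hence "n * int p \<le> 0" by (simp add: mult_nonpos_nonneg)
      thus False using \<open>int ?r = n * int p\<close> \<open>int ?r > 0\<close> by linarith
    next
      case False hence "n * int p \<ge> 1 * int p" by (intro mult_right_mono) auto
      thus False using \<open>int ?r = n * int p\<close> \<open>int ?r < int p\<close> by linarith
    qed
  qed
qed

lemma q_0: "0 \<in> Qzeta p"
  unfolding Qzeta_def by (rule CollectI, rule exI[of _ "\<lambda>_. 0"]) simp

lemma q_pow: assumes p: "p > 0" shows "zeta p ^ k \<in> Qzeta p"
proof -
  have "(\<Sum>j<p. of_rat (if j = k mod p then 1 else 0) * zeta p ^ j) = (\<Sum>j<p. if j = k mod p then zeta p ^ j else 0)"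
    by (intro sum.cong) auto
  also have "\<dots> = zeta p ^ (k mod p)" using p by (simp add: sum.delta)
  also have "\<dots> = zeta p ^ k" using zeta_pow_mod[OF p] by simp
  finally have "zeta p ^ k = (\<Sum>j<p. of_rat (if j = k mod p then 1 else 0) * zeta p ^ j)" by simp
  thus ?thesis unfolding Qzeta_def by (intro CollectI exI[of _ "\<lambda>j. if j = k mod p then 1 else 0"]) simp
qed

lemma q_add: assumes "x \<in> Qzeta p" "y \<in> Qzeta p" shows "x + y \<in> Qzeta p"
proof -
  obtain r r' where "x = (\<Sum>j<p. of_rat (r j) * zeta p ^ j)" "y = (\<Sum>j<p. of_rat (r' j) * zeta p ^ j)"
    using assms unfolding Qzeta_def by blast
  hence "x + y = (\<Sum>j<p. of_rat (r j + r' j) * zeta p ^ j)"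
    by (simp add: of_rat_add distrib_right sum.distrib)
  thus ?thesis unfolding Qzeta_def by (intro CollectI exI[of _ "\<lambda>j. r j + r' j"]) simp
qed

lemma q_sum: assumes p: "p > 0" shows "(\<Sum>x\<in>A. zeta p ^ e x) \<in> Qzeta p"
proof (induction A rule: infinite_finite_induct)
  case (infinite A) thus ?case by (simp add: q_0)
next
  case empty thus ?case by (simp add: q_0)
next
  case (insert x F) thus ?case by (simp add: q_add q_pow[OF p])
qed

context
  fixes p \<gamma> :: nat and \<sigma> :: "complex \<Rightarrow> complex"
  assumes p: "p > 0" and sig: "is_galois_sigma p \<gamma> \<sigma>"
begin

lemma sig_add: "x \<in> Qzeta p \<Longrightarrow> y \<in> Qzeta p \<Longrightarrow> \<sigma> (x + y) = \<sigma> x + \<sigma> y"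
  using sig unfolding is_galois_sigma_def by blast

lemma sig_mult: "x \<in> Qzeta p \<Longrightarrow> y \<in> Qzeta p \<Longrightarrow> \<sigma> (x * y) = \<sigma> x * \<sigma> y"
  using sig unfolding is_galois_sigma_def by blast

lemma sig_0: "\<sigma> 0 = 0"
  using sig_add[OF q_0 q_0] by simp

lemma sig_1: "\<sigma> 1 = 1" using sig unfolding is_galois_sigma_def by blast

lemma sig_pow: "\<sigma> (zeta p ^ k) = zeta p ^ (\<gamma> * k)"
proof (induction k)
  case 0 thus ?case by (simp add: sig_1)
next
  case (Suc k)
  have "\<sigma> (zeta p ^ Suc k) = \<sigma> (zeta p ^ k * zeta p)" by (simp add: mult.commute)
  also have "\<dots> = \<sigma> (zeta p ^ k) * \<sigma> (zeta p)"
    by (rule sig_mult[OF q_pow[OF p] q_pow[OF p, of 1, simplified]])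
  also have "\<sigma> (zeta p) = zeta p ^ \<gamma>" using sig unfolding is_galois_sigma_def by blast
  finally have "\<sigma> (zeta p ^ Suc k) = zeta p ^ (\<gamma> * k) * zeta p ^ \<gamma>" using Suc by simp
  thus ?case by (metis power_add mult_Suc_right add.commute)
qed

lemma sig_sum: "\<sigma> (\<Sum>x\<in>A. zeta p ^ e x) = (\<Sum>x\<in>A. zeta p ^ (\<gamma> * e x))"
proof (induction A rule: infinite_finite_induct)
  case (infinite A) thus ?case by (simp add: sig_0)
next
  case empty thus ?case by (simp add: sig_0)
next
  case (insert x F)
  thus ?case by (simp add: sig_add[OF q_pow[OF p] q_sum[OF p]] sig_pow)
qed

lemma sig_iter: "(\<sigma> ^^ n) (\<Sum>x\<in>A. zeta p ^ e x) = (\<Sum>x\<in>A. zeta p ^ (\<gamma> ^ n * e x))"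
proof (induction n)
  case 0 thus ?case by simp
next
  case (Suc n)
  thus ?case by (simp add: sig_sum mult.assoc)
qed

lemma sig_2: "\<sigma> 2 = 2"
proof -
  have h: "\<sigma> (1 + 1) = \<sigma> 1 + \<sigma> 1" by (rule sig_add) (use q_pow[OF p, of 0] in simp)+
  thus ?thesis using sig_1 by (simp add: one_add_one)
qed

lemma sig_iter_2: "(\<sigma> ^^ n) 2 = 2"
  by (induction n) (simp_all add: sig_2)

end

lemma G_val:
  assumes pr: "prime p" and g: "residue_primroot p \<gamma>"
  shows "(\<Sum>n<p - 1. zeta p ^ (\<gamma> ^ n * j)) = (if p dvd j then of_nat (p - 1) else -1)"
proof -
  have p: "p > 0" "p > 1" using pr prime_gt_1_nat prime_gt_0_nat by auto
  define \<omega> where "\<omega> = zeta p ^ j"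
  have wp: "\<omega> ^ p = 1" unfolding \<omega>_def using zeta_pow_p[OF p(1)]
    by (metis power_mult mult.commute power_one)
  have wm: "\<omega> ^ m = \<omega> ^ (m mod p)" for m
  proof -
    have "\<omega> ^ m = \<omega> ^ (p * (m div p) + m mod p)" by simp
    also have "\<dots> = (\<omega> ^ p) ^ (m div p) * \<omega> ^ (m mod p)" by (simp only: power_add power_mult)
    finally show ?thesis using wp by simp
  qed
  have "(\<Sum>n<p - 1. zeta p ^ (\<gamma> ^ n * j)) = (\<Sum>n<totient p. \<omega> ^ (\<gamma> ^ n mod p))"
    using wm by (simp add: \<omega>_def totient_prime[OF pr] power_mult mult.commute[of _ j])
  also have "\<dots> = (\<Sum>t\<in>totatives p. \<omega> ^ t)"
    by (rule sum.reindex_bij_betw[OF residue_primroot_is_generator[OF p(2) g]])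
  also have "\<dots> = (\<Sum>t\<in>{0<..<p}. \<omega> ^ t)" by (simp add: totatives_prime[OF pr])
  also have "\<dots> = (\<Sum>t<p. \<omega> ^ t) - 1"
  proof -
    have "{..<p} = insert 0 {0<..<p}" using p by auto
    hence "(\<Sum>t<p. \<omega> ^ t) = 1 + (\<Sum>t\<in>{0<..<p}. \<omega> ^ t)" by simp
    thus ?thesis by simp
  qed
  also have "\<dots> = (if p dvd j then of_nat (p - 1) else -1)"
  proof (cases "p dvd j")
    case True
    hence "\<omega> = 1" unfolding \<omega>_def using zeta_pow_eq1[OF p(1)] by simp
    thus ?thesis using True p by (simp add: of_nat_diff)
  next
    case False
    hence "\<omega> \<noteq> 1" unfolding \<omega>_def using zeta_pow_eq1[OF p(1)] by simp
    thus ?thesis using False wp by (simp add: sum_gp_strict)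
  qed
  finally show ?thesis .
qed

lemma G_shift:
  assumes pr: "prime p" and g: "residue_primroot p \<gamma>"
  shows "(p dvd \<gamma> ^ k * j) \<longleftrightarrow> p dvd j"
proof -
  have "coprime p \<gamma>" using g by (simp add: residue_primroot_def)
  hence "coprime p (\<gamma> ^ k)" by simp
  thus ?thesis by (simp add: coprime_dvd_mult_right_iff)
qed

lemma sum_G:
  fixes P :: "'b::finite \<Rightarrow> bool"
  assumes "p > 0"
  shows "(\<Sum>x\<in>UNIV. if P x then of_nat (p - 1) else (-1::complex))
       = of_nat p * of_nat (card {x. P x}) - of_nat CARD('b)"
proof -
  have "(\<Sum>x\<in>UNIV. if P x then of_nat (p - 1) else (-1::complex))
      = (\<Sum>x\<in>UNIV. of_nat p * (if P x then 1 else 0) - 1)"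
    using assms by (intro sum.cong) (auto simp: of_nat_diff)
  also have "\<dots> = of_nat p * (\<Sum>x\<in>UNIV. (if P x then 1 else 0)) - of_nat CARD('b)"
    by (simp add: sum_subtractf sum_distrib_left)
  also have "(\<Sum>x\<in>UNIV. (if P x then 1 else 0) :: complex) = of_nat (card {x. P x})"
    by (simp add: sum.If_cases)
  finally show ?thesis .
qed



lemma T_S:
  assumes pr: "prime p" and g: "residue_primroot p \<gamma>" and sig: "is_galois_sigma p \<gamma> \<sigma>"
  shows "(\<Sum>n<p - 1. (\<sigma> ^^ n) (\<Sum>x\<in>A. zeta p ^ e x))
         = (\<Sum>x\<in>A. if p dvd e x then of_nat (p - 1) else -1)"
proof -
  have p: "p > 0" using pr prime_gt_0_nat by blast
  have "(\<Sum>n<p - 1. (\<sigma> ^^ n) (\<Sum>x\<in>A. zeta p ^ e x)) = (\<Sum>n<p - 1. \<Sum>x\<in>A. zeta p ^ (\<gamma> ^ n * e x))"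
    by (simp add: sig_iter[OF p sig])
  also have "\<dots> = (\<Sum>x\<in>A. \<Sum>n<p - 1. zeta p ^ (\<gamma> ^ n * e x))" by (rule sum.swap)
  also have "\<dots> = (\<Sum>x\<in>A. if p dvd e x then of_nat (p - 1) else -1)"
    by (intro sum.cong refl G_val[OF pr g])
  finally show ?thesis .
qed

theorem proposition2p5:
  fixes s \<gamma> :: nat and \<sigma> :: "complex \<Rightarrow> complex"
  assumes "s > 0"
    and "coprime s (CARD('a::{finite,field}) - 1)"
    and "residue_primroot CHAR('a) \<gamma>"
    and "is_galois_sigma CHAR('a) \<gamma> \<sigma>"
  shows "(single_cycle \<sigma> (Wset TYPE('a) s) \<longleftrightarrow> CARD('a) = 2)
         \<and> (CARD('a) = 2 \<longrightarrow> degenerate TYPE('a) s \<and> card (Wset TYPE('a) s) = 1)"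
proof -
  note s = assms(1) and cop = assms(2) and g = assms(3) and sig = assms(4)
  let ?p = "CHAR('a)" and ?q = "CARD('a)"
  have pr: "prime ?p" by (rule char_prime)
  have p0: "?p > 0" using pr prime_gt_0_nat by blast
  have Wform: "Wsum s u = (\<Sum>x\<in>UNIV. zeta ?p ^ trace_nat (x ^ s - u * x))" for u :: 'a
    by (simp add: Wsum_def psi_def)
  show ?thesis
  proof (cases "?q = 2")
    case True
    have univ: "{0::'a, 1} = UNIV"
      by (rule card_subset_eq) (use True in auto)
    have xs: "x ^ s = x" for x :: 'a
    proof -
      have "x = 0 \<or> x = 1" using univ by blast
      thus ?thesis using s by auto
    qed
    have W1: "Wsum s (1::'a) = 2"
      using True by (simp add: Wform xs trace_nat_0)
    have Wset2: "Wset TYPE('a) s = {2}"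
    proof -
      have "u \<noteq> 0 \<Longrightarrow> u = 1" for u :: 'a using univ by blast
      thus ?thesis unfolding Wset_def using W1 by auto
    qed
    have sc: "single_cycle \<sigma> (Wset TYPE('a) s)"
      unfolding Wset2 single_cycle_def by (auto simp: sig_iter_2[OF p0 sig])
    have deg: "degenerate TYPE('a) s"
      unfolding degenerate_def using True by (auto simp: cong_def)
    show ?thesis using sc deg Wset2 True by simp
  next
    case False
    hence q2: "?q > 2" using card_ge2[where 'a='a] by simp
    have "\<not> single_cycle \<sigma> (Wset TYPE('a) s)"
    proof
      assume sc: "single_cycle \<sigma> (Wset TYPE('a) s)"
      define W1 where "W1 = Wsum s (1::'a)"
      have "W1 \<in> Wset TYPE('a) s" unfolding Wset_def W1_def by auto
      hence orb: "Wset TYPE('a) s = {(\<sigma> ^^ n) W1 | n. True}" using sc unfolding single_cycle_def by blast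
      define T where "T = (\<lambda>w. \<Sum>n<?p - 1. (\<sigma> ^^ n) w)"
      define A where "A = (\<lambda>u::'a. {x::'a. abs_trace (x ^ s - u * x) = 0})"
      have TW: "T (Wsum s u) = of_nat ?p * of_nat (card (A u)) - of_nat ?q" for u :: 'a
      proof -
        have "T (Wsum s u) = (\<Sum>x\<in>UNIV. if ?p dvd trace_nat (x ^ s - u * x) then of_nat (?p - 1) else -1)"
          unfolding T_def Wform by (rule T_S[OF pr g sig])
        also have "\<dots> = of_nat ?p * of_nat (card {x::'a. ?p dvd trace_nat (x ^ s - u * x)}) - of_nat ?q"
          by (rule sum_G[OF p0])
        finally show ?thesis by (simp add: A_def trace_nat_dvd)
      qed
      have TW1: "T ((\<sigma> ^^ k) W1) = T W1" for k
      proof -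
        have "(\<sigma> ^^ k) W1 = (\<Sum>x\<in>UNIV. zeta ?p ^ (\<gamma> ^ k * trace_nat ((x::'a) ^ s - 1 * x)))"
          unfolding W1_def Wform
          using sig_iter[OF p0 sig, where n=k and A="UNIV::'a set" and e="\<lambda>x::'a. trace_nat ((x::'a) ^ s - 1 * x)"]
          by simp
        hence "T ((\<sigma> ^^ k) W1) = (\<Sum>x\<in>UNIV. if ?p dvd \<gamma> ^ k * trace_nat ((x::'a) ^ s - 1 * x) then of_nat (?p - 1) else -1)"
          unfolding T_def by (simp only: T_S[OF pr g sig])
        also have "\<dots> = (\<Sum>x\<in>UNIV. if ?p dvd trace_nat ((x::'a) ^ s - 1 * x) then of_nat (?p - 1) else -1)"
          by (simp only: G_shift[OF pr g])
        also have "\<dots> = T W1"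
          unfolding T_def W1_def Wform by (rule T_S[OF pr g sig, symmetric])
        finally show ?thesis .
      qed
      have "\<forall>u::'a. u \<noteq> 0 \<longrightarrow> card (A u) = card (A 1)"
      proof (intro allI impI)
        fix u :: 'a assume "u \<noteq> 0"
        hence "Wsum s u \<in> Wset TYPE('a) s" unfolding Wset_def by auto
        then obtain k where k: "Wsum s u = (\<sigma> ^^ k) W1" using orb by blast
        have "of_nat ?p * of_nat (card (A u)) - of_nat ?q = (of_nat ?p * of_nat (card (A 1)) - of_nat ?q :: complex)"
          using TW[of u] TW[of 1] TW1[of k] k W1_def by simp
        hence "(of_nat (?p * card (A u)) :: complex) = of_nat (?p * card (A 1))" by simp
        hence "?p * card (A u) = ?p * card (A 1)" by (simp only: of_nat_eq_iff)
        thus "card (A u) = card (A 1)" using p0 by simp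
      qed
      thus False using field_main[OF q2 s cop] unfolding A_def by simp
    qed
    thus ?thesis using False by simp
  qed
qed

end
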